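(* Let $G=(V,W,E)$ be an odd bipartite graph with parts $V$ and $W$. Then there is some $V'\subseteq V$ with $|V'|\leq |W|$ such that the induced subgraph $G[V'\cup W]$ (with parts $V'$ and $W$) is odd.
   Context: A bipartite graph $G=(V,W,E)$ (with distinguished parts $V$, $W$) is called odd if for every nonempty $X\subseteq W$ there is some $v\in V$ such that $|X\cap N(v)|$ is odd, where $N(v)$ is the neighbourhood of $v$. *)

theory Defs
  imports Main
begin

definition bip_graph :: "'a set \<Rightarrow> 'b set \<Rightarrow> ('a \<times> 'b) set \<Rightarrow> bool" where
  "bip_graph V W E \<longleftrightarrow> finite V \<and> finite W \<and> E \<subseteq> V \<times> W"

definition nbhd :: "'a set \<Rightarrow> 'b set \<Rightarrow> ('a \<times> 'b) set \<Rightarrow> 'a \<Rightarrow> 'b set" where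
  "nbhd V W E v = {w \<in> W. (v, w) \<in> E}"

definition odd_bip :: "'a set \<Rightarrow> 'b set \<Rightarrow> ('a \<times> 'b) set \<Rightarrow> bool" where
  "odd_bip V W E \<longleftrightarrow>
     (\<forall>X. X \<subseteq> W \<and> X \<noteq> {} \<longrightarrow> (\<exists>v\<in>V. odd (card (X \<inter> nbhd V W E v))))"

definition induced_edges :: "'a set \<Rightarrow> 'b set \<Rightarrow> ('a \<times> 'b) set \<Rightarrow> ('a \<times> 'b) set" where
  "induced_edges V' W E = E \<inter> (V' \<times> W)"

end

theory Submission imports Defs begin

lemma par_sum: "finite X \<Longrightarrow> even (\<Sum>w\<in>X. c w :: nat) \<longleftrightarrow> even (card {w\<in>X. odd (c w)})"
proof (induction X rule: finite_induct)
  case empty then show ?case by simp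
next
  case (insert x F)
  have "{w\<in>insert x F. odd (c w)} = (if odd (c x) then insert x {w\<in>F. odd (c w)} else {w\<in>F. odd (c w)})"
    by auto
  then show ?case using insert by (auto simp: card_insert_if)
qed

lemma dcount:
  assumes "finite S" "finite W"
  shows "(\<Sum>v\<in>S. card (X \<inter> {w\<in>W. (v,w)\<in>E})) = (\<Sum>w\<in>X\<inter>W. card {v\<in>S. (v,w)\<in>E})"
proof -
  have "(\<Sum>v\<in>S. card (X \<inter> {w\<in>W. (v,w)\<in>E})) = (\<Sum>v\<in>S. \<Sum>w\<in>X\<inter>W. if (v,w)\<in>E then 1 else 0)"
  proof (rule sum.cong)
    fix v assume "v \<in> S"
    have "X \<inter> {w\<in>W. (v,w)\<in>E} = X \<inter> W \<inter> {w. (v,w)\<in>E}" by auto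
    then show "card (X \<inter> {w\<in>W. (v,w)\<in>E}) = (\<Sum>w\<in>X\<inter>W. if (v,w)\<in>E then 1 else 0)"
      using assms by (simp add: sum.If_cases)
  qed simp
  also have "\<dots> = (\<Sum>w\<in>X\<inter>W. \<Sum>v\<in>S. if (v,w)\<in>E then 1 else 0)" by (rule sum.swap)
  also have "\<dots> = (\<Sum>w\<in>X\<inter>W. card {v\<in>S. (v,w)\<in>E})"
    using assms by (simp add: sum.If_cases Int_def)
  finally show ?thesis .
qed

lemma odd_ind:
  "odd_bip U W (induced_edges U W E) \<longleftrightarrow>
   (\<forall>X. X \<subseteq> W \<and> X \<noteq> {} \<longrightarrow> (\<exists>v\<in>U. odd (card (X \<inter> {w\<in>W. (v,w)\<in>E}))))"
proof -
  have "\<And>v. v \<in> U \<Longrightarrow> nbhd U W (induced_edges U W E) v = {w\<in>W. (v,w)\<in>E}"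
    unfolding nbhd_def induced_edges_def by auto
  then show ?thesis unfolding odd_bip_def by simp
qed

lemma split3: "finite A \<Longrightarrow> sum (h::'x \<Rightarrow> nat) A = sum h (A - B) + sum h (A \<inter> B)"
proof -
  assume "finite A"
  have "A = (A - B) \<union> (A \<inter> B)" by auto
  then have "sum h A = sum h ((A - B) \<union> (A \<inter> B))" by simp
  also have "\<dots> = sum h (A - B) + sum h (A \<inter> B)"
    using \<open>finite A\<close> by (intro sum.union_disjoint) auto
  finally show ?thesis .
qed

theorem mainTheorem4:
  fixes V :: "'a set" and W :: "'b set" and E :: "('a \<times> 'b) set"
  assumes "bip_graph V W E"
    and "odd_bip V W E"
  shows "\<exists>V'. V' \<subseteq> V \<and> card V' \<le> card W \<and> odd_bip V' W (induced_edges V' W E)"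
proof -
  have fV: "finite V" and fW: "finite W" and EVW: "E \<subseteq> V \<times> W"
    using assms(1) unfolding bip_graph_def by auto
  define N where "N v = {w\<in>W. (v,w)\<in>E}" for v
  define ok where "ok U \<longleftrightarrow> U \<subseteq> V \<and> (\<forall>X. X \<subseteq> W \<and> X \<noteq> {} \<longrightarrow> (\<exists>v\<in>U. odd (card (X \<inter> N v))))" for U
  have okV: "ok V"
  proof -
    have "induced_edges V W E = E" using EVW unfolding induced_edges_def by auto
    then show ?thesis using assms(2) odd_ind[of V W E] unfolding ok_def N_def by auto
  qed
  define P where "P n \<longleftrightarrow> (\<exists>U. ok U \<and> card U = n)" for n
  have "P (card V)" using okV P_def by auto
  then have "P (LEAST n. P n)" by (rule LeastI)
  then obtain V' where okV': "ok V'" and cV': "card V' = (LEAST n. P n)" unfolding P_def by auto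
  have minV': "card V' \<le> card U" if "ok U" for U
    using cV' Least_le[of P "card U"] that P_def by auto
  have V'V: "V' \<subseteq> V" using okV' ok_def by auto
  have fV': "finite V'" using V'V fV finite_subset by auto
  define g where "g S = {w\<in>W. odd (card {v\<in>S. (v,w)\<in>E})}" for S
  have key: "odd (card (X \<inter> g S)) \<longleftrightarrow> odd (\<Sum>v\<in>S. card (X \<inter> N v))"
    if "X \<subseteq> W" "S \<subseteq> V'" for X S
  proof -
    have fS: "finite S" using that fV' finite_subset by auto
    have fX: "finite X" using that fW finite_subset by auto
    have XW: "X \<inter> W = X" using that by auto
    have "(\<Sum>v\<in>S. card (X \<inter> N v)) = (\<Sum>w\<in>X. card {v\<in>S. (v,w)\<in>E})"
      using dcount[OF fS fW, of X E] unfolding N_def XW .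
    moreover have "{w\<in>X. odd (card {v\<in>S. (v,w)\<in>E})} = X \<inter> g S"
      using that unfolding g_def by auto
    ultimately show ?thesis using par_sum[OF fX, of "\<lambda>w. card {v\<in>S. (v,w)\<in>E}"] by simp
  qed
  have inj: "inj_on g (Pow V')"
  proof (rule inj_onI, rule ccontr)
    fix S1 S2 assume S1: "S1 \<in> Pow V'" and S2: "S2 \<in> Pow V'" and geq: "g S1 = g S2" and ne: "S1 \<noteq> S2"
    define T where "T = (S1 - S2) \<union> (S2 - S1)"
    have TV': "T \<subseteq> V'" using S1 S2 T_def by auto
    have fT: "finite T" using TV' fV' finite_subset by auto
    obtain u where uT: "u \<in> T" using ne T_def by auto
    have evT: "even (\<Sum>v\<in>T. card (X \<inter> N v))" if XW: "X \<subseteq> W" for X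
    proof -
      let ?h = "\<lambda>v. card (X \<inter> N v)"
      have f1: "finite S1" "finite S2" using S1 S2 fV' finite_subset by auto
      have "sum ?h T = sum ?h (S1 - S2) + sum ?h (S2 - S1)"
        unfolding T_def using f1 by (intro sum.union_disjoint) auto
      moreover have "sum ?h S1 = sum ?h (S1 - S2) + sum ?h (S1 \<inter> S2)"
        using f1 by (simp add: split3)
      moreover have "sum ?h S2 = sum ?h (S2 - S1) + sum ?h (S1 \<inter> S2)"
        using f1 split3[of S2 ?h S1] by (simp add: Int_commute)
      moreover have "odd (sum ?h S1) \<longleftrightarrow> odd (sum ?h S2)"
        using key[OF XW, of S1] key[OF XW, of S2] S1 S2 geq by simp
      ultimately show ?thesis by presburger
    qed
    have "ok (V' - {u})"
      unfolding ok_def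
    proof (intro conjI allI impI)
      show "V' - {u} \<subseteq> V" using V'V by auto
      fix X assume X: "X \<subseteq> W \<and> X \<noteq> {}"
      then obtain v where v: "v \<in> V'" "odd (card (X \<inter> N v))" using okV' unfolding ok_def by blast
      show "\<exists>v\<in>V' - {u}. odd (card (X \<inter> N v))"
      proof (cases "v = u")
        case False then show ?thesis using v by auto
      next
        case True
        have "sum (\<lambda>v. card (X \<inter> N v)) T = card (X \<inter> N u) + sum (\<lambda>v. card (X \<inter> N v)) (T - {u})"
          using sum.remove[OF fT uT] .
        then have "odd (sum (\<lambda>v. card (X \<inter> N v)) (T - {u}))"
        proof -
          have "even (sum (\<lambda>v. card (X \<inter> N v)) T)" using evT X by blast
          then show ?thesis using \<open>sum (\<lambda>v. card (X \<inter> N v)) T = _\<close> v True by simp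
        qed
        then obtain v' where "v' \<in> T - {u}" "odd (card (X \<inter> N v'))"
        proof -
          assume odd: "odd (sum (\<lambda>v. card (X \<inter> N v)) (T - {u}))"
            and th: "\<And>v'. v' \<in> T - {u} \<Longrightarrow> odd (card (X \<inter> N v')) \<Longrightarrow> thesis"
          show thesis
          proof (rule ccontr)
            assume "\<not> thesis"
            then have "\<forall>v'\<in>T - {u}. even (card (X \<inter> N v'))" using th by blast
            then have "even (sum (\<lambda>v. card (X \<inter> N v)) (T - {u}))" by (intro dvd_sum) auto
            then show False using odd by simp
          qed
        qed
        then show ?thesis using TV' by auto
      qed
    qed
    then have "card V' \<le> card (V' - {u})" by (rule minV')
    moreover have "card (V' - {u}) < card V'" using uT TV' fV' by (intro card_Diff1_less) auto
    ultimately show False by simp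
  qed
  have "g ` Pow V' \<subseteq> Pow W" unfolding g_def by auto
  then have "card (Pow V') \<le> card (Pow W)"
    using card_inj_on_le[OF inj] fW by auto
  then have "(2::nat) ^ card V' \<le> 2 ^ card W" using fV' fW by (simp add: card_Pow)
  then have "card V' \<le> card W" by simp
  moreover have "odd_bip V' W (induced_edges V' W E)"
    using okV' odd_ind[of V' W E] unfolding ok_def N_def by auto
  ultimately show ?thesis using V'V by auto
qed

end
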